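(* Let $X_1, X_2, \ldots$ be i.i.d.\ with $\mathbb{P}\{X_1 = 2^k\} = 2^{-k}$, $k \in \mathbb{N}$. For $n \geq 1$ let $X_{1n} \geq \cdots \geq X_{nn}$ be the decreasing rearrangement of $X_1,\ldots,X_n$, $S_{n,r} = \sum_{k=r+1}^n X_{kn}$, and $\gamma_n = n/2^{\lceil \log_2 n\rceil}$. Fix an integer $r \geq 0$. There is a finite constant $C > 0$ such that for any $\delta \in (0,1)$, $x \geq e$ and $n \geq 1$, \[ \mathbb{P}\left\{ \frac{S_{n,r}}{n} - a^{(r)}_{n,\gamma_n} > x\right\} \leq \frac{2^{r+1}}{(r+1)!}\left[(1-\delta)x\right]^{-(r+1)} + C\, \delta^{-(r+3/2)} x^{-(r+3/2)}, \] where $a^{(r)}_{n,\gamma} = \sum_{j=r+1}^n \frac{\Psi(j/\gamma)}{j}$.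
   Context: $\Psi(x) = 2^{\{\log_2 x\}}$ for $x>0$, where $\{y\}$ is the fractional part of $y$. *)

theory Defs
  imports "HOL-Probability.Probability"
begin

definition Psi :: "real \<Rightarrow> real" where
  "Psi x = 2 powr frac (log 2 x)"

definition gamma_n :: "nat \<Rightarrow> real" where
  "gamma_n n = real n / 2 powr real_of_int (ceiling (log 2 (real n)))"

definition a_const :: "nat \<Rightarrow> nat \<Rightarrow> real \<Rightarrow> real" where
  "a_const r n g = (\<Sum>j = r+1..n. Psi (real j / g) / real j)"

definition dec_rearr :: "(nat \<Rightarrow> 'a \<Rightarrow> real) \<Rightarrow> nat \<Rightarrow> 'a \<Rightarrow> real list" where
  "dec_rearr X n \<omega> = rev (sort (map (\<lambda>i. X i \<omega>) [1..<n+1]))"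

definition trimmed_sum :: "(nat \<Rightarrow> 'a \<Rightarrow> real) \<Rightarrow> nat \<Rightarrow> nat \<Rightarrow> 'a \<Rightarrow> real" where
  "trimmed_sum X n r \<omega> = (\<Sum>k = r+1..n. dec_rearr X n \<omega> ! (k - 1))"

end

theory Submission
  imports Defs
begin


lemma geom_sum_half: "(\<Sum>k\<in>{1..N}. 1 / (2::real) ^ k) = 1 - 1 / 2 ^ N"
  by (induction N) (auto simp: field_simps)

locale stp = prob_space M for M :: "'a measure" +
  fixes X :: "nat \<Rightarrow> 'a \<Rightarrow> real"
  assumes Xm[measurable]: "\<And>i. X i \<in> borel_measurable M"
    and indep: "indep_vars (\<lambda>_. borel) X UNIV"
    and dist: "\<And>i k. k \<ge> 1 \<Longrightarrow> measure M {\<omega> \<in> space M. X i \<omega> = 2 ^ k} = 1 / 2 ^ k"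
begin

lemma fin_union:
  "prob (\<Union>k\<in>{1..N}. {\<omega> \<in> space M. X i \<omega> = 2 ^ k}) = 1 - 1 / 2 ^ N"
proof -
  have "prob (\<Union>k\<in>{1..N}. {\<omega> \<in> space M. X i \<omega> = 2 ^ k}) =
        (\<Sum>k\<in>{1..N}. prob {\<omega> \<in> space M. X i \<omega> = 2 ^ k})"
    by (rule measure_finite_Union) (auto simp: disjoint_family_on_def)
  also have "\<dots> = (\<Sum>k\<in>{1..N}. 1 / (2::real) ^ k)"
    by (intro sum.cong) (auto simp: dist)
  finally show ?thesis using geom_sum_half[of N] by simp
qed

definition G :: "nat \<Rightarrow> 'a set" where
  "G i = (\<Union>k. {\<omega> \<in> space M. X i \<omega> = 2 ^ Suc k})"

lemma G_sets[measurable]: "G i \<in> sets M"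
  unfolding G_def by measurable

lemma G_prob: "prob (G i) = 1"
proof (rule antisym)
  show "prob (G i) \<le> 1" by simp
  show "1 \<le> prob (G i)"
  proof (rule ccontr)
    assume "\<not> 1 \<le> prob (G i)"
    then have lt: "0 < 1 - prob (G i)" by simp
    obtain N :: nat where N: "1 / (1 - prob (G i)) < 2 ^ N"
      using real_arch_pow[of 2 "1 / (1 - prob (G i))"] by auto
    have "(\<Union>k\<in>{1..N}. {\<omega> \<in> space M. X i \<omega> = 2 ^ k}) \<subseteq> G i"
    proof
      fix \<omega> assume "\<omega> \<in> (\<Union>k\<in>{1..N}. {\<omega> \<in> space M. X i \<omega> = 2 ^ k})"
      then obtain k where k: "k \<in> {1..N}" "\<omega> \<in> space M" "X i \<omega> = 2 ^ k" by auto
      obtain j where "k = Suc j" using k by (cases k) auto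
      then show "\<omega> \<in> G i" unfolding G_def using k by auto
    qed
    then have "prob (\<Union>k\<in>{1..N}. {\<omega> \<in> space M. X i \<omega> = 2 ^ k}) \<le> prob (G i)"
      by (intro finite_measure_mono) auto
    then have "1 - 1 / 2 ^ N \<le> prob (G i)"
      using fin_union[of i N] by simp
    moreover have "1 / 2 ^ N < 1 - prob (G i)"
      using N lt by (simp add: field_simps)
    ultimately show False by simp
  qed
qed

lemma G_pow2: "\<omega> \<in> G i \<Longrightarrow> \<exists>k\<ge>1. X i \<omega> = 2 ^ k"
  unfolding G_def by auto

lemma tail: assumes "t > 0" shows "prob {\<omega> \<in> space M. t < X i \<omega>} \<le> 2 / t"
proof (cases "t < 1")
  case True
  have "prob {\<omega> \<in> space M. t < X i \<omega>} \<le> 1" by simp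
  also have "1 \<le> 2 / t" using True assms by (simp add: field_simps)
  finally show ?thesis .
next
  case False
  define N where "N = nat \<lfloor>log 2 t\<rfloor>"
  have lg: "0 \<le> log 2 t" using False by simp
  have RN: "real N = of_int \<lfloor>log 2 t\<rfloor>" using lg by (simp add: N_def)
  have N1: "2 ^ N \<le> t"
  proof -
    have "(2::real) ^ N = 2 powr real N" by (simp add: powr_realpow)
    also have "real N = of_int \<lfloor>log 2 t\<rfloor>" using lg by (simp add: N_def)
    also have "2 powr \<dots> \<le> 2 powr (log 2 t)" by (intro powr_mono) auto
    also have "\<dots> = t" using assms by simp
    finally show ?thesis .
  qed
  have N2: "t < 2 * 2 ^ N"
  proof -
    have "t = 2 powr (log 2 t)" using assms by simp
    also have "\<dots> < 2 powr (real N + 1)"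
      using RN floor_correct[of "log 2 t"] by (intro powr_less_mono) auto
    also have "\<dots> = 2 * 2 ^ N" by (simp add: powr_add powr_realpow)
    finally show ?thesis .
  qed
  have sub: "{\<omega> \<in> space M. t < X i \<omega>} \<subseteq> space M - (\<Union>k\<in>{1..N}. {\<omega> \<in> space M. X i \<omega> = 2 ^ k})"
  proof safe
    fix \<omega> k assume "\<omega> \<in> space M" "t < X i \<omega>" "k \<in> {1..N}" "X i \<omega> = 2 ^ k"
    moreover have "(2::real) ^ k \<le> 2 ^ N" using \<open>k \<in> {1..N}\<close> by (intro power_increasing) auto
    ultimately show False using N1 by simp
  qed
  have "prob {\<omega> \<in> space M. t < X i \<omega>} \<le> prob (space M - (\<Union>k\<in>{1..N}. {\<omega> \<in> space M. X i \<omega> = 2 ^ k}))"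
    by (rule finite_measure_mono[OF sub]) measurable
  also have "\<dots> = 1 - (1 - 1 / 2 ^ N)"
    using fin_union[of i N] by (subst prob_compl) auto
  also have "\<dots> = 1 / 2 ^ N" by simp
  also have "\<dots> \<le> 2 / t" using N2 assms by (simp add: field_simps)
  finally show ?thesis .
qed

end


lemma binom_bound:
  assumes "c \<ge> 0"
  shows "real (n choose k) * c ^ k \<le> (real n * c) ^ k / fact k"
proof -
  have "real (n choose k) * fact k \<le> real n ^ k"
    using binomial_fact_pow[of n k] by (metis of_nat_fact of_nat_le_iff of_nat_mult of_nat_power)
  then have "real (n choose k) \<le> real n ^ k / fact k" by (simp add: field_simps)
  then have "real (n choose k) * c ^ k \<le> real n ^ k / fact k * c ^ k"
    using assms by (intro mult_right_mono) auto
  then show ?thesis by (simp add: power_mult_distrib)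
qed

context stp begin

definition Ex :: "nat \<Rightarrow> nat \<Rightarrow> real \<Rightarrow> 'a set" where
  "Ex n k t = (\<Union>S\<in>{S. S \<subseteq> {1..n} \<and> card S = k}. \<Inter>i\<in>S. {\<omega> \<in> space M. t < X i \<omega>})"

lemma fin_subsets: "finite {S. S \<subseteq> {1..n::nat} \<and> card S = k}"
  by (rule finite_subset[of _ "Pow {1..n}"]) auto

lemma Ex_sets: assumes "k \<ge> 1" shows "Ex n k t \<in> sets M"
  unfolding Ex_def
proof (intro sets.finite_UN fin_subsets ballI sets.finite_INT)
  fix S assume "S \<in> {S. S \<subseteq> {1..n} \<and> card S = k}"
  then show "finite S" "S \<noteq> {}" using assms
    by (auto dest: finite_subset[OF _ finite_atLeastAtMost])
qed measurable

lemma Ex_mem: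
  assumes "\<omega> \<in> space M" "k \<le> card {i\<in>{1..n}. t < X i \<omega>}"
  shows "\<omega> \<in> Ex n k t"
proof -
  obtain T where T: "T \<subseteq> {i\<in>{1..n}. t < X i \<omega>}" "card T = k"
    using obtain_subset_with_card_n[OF assms(2)] by blast
  then show ?thesis unfolding Ex_def using assms(1) by blast
qed

lemma Ex_prob:
  assumes "k \<ge> 1" "t > 0"
  shows "prob (Ex n k t) \<le> real (n choose k) * (2 / t) ^ k"
proof -
  let ?SS = "{S. S \<subseteq> {1..n} \<and> card S = k}"
  have "prob (Ex n k t) \<le> (\<Sum>S\<in>?SS. prob (\<Inter>i\<in>S. {\<omega> \<in> space M. t < X i \<omega>}))"
    unfolding Ex_def
  proof (rule finite_measure_subadditive_finite[OF fin_subsets], safe)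
    fix S assume "S \<subseteq> {1..n}" "k = card S"
    then show "(\<Inter>i\<in>S. {\<omega> \<in> space M. t < X i \<omega>}) \<in> sets M" using assms
      by (intro sets.finite_INT) (auto dest: finite_subset[OF _ finite_atLeastAtMost])
  qed
  also have "\<dots> \<le> (\<Sum>S\<in>?SS. (2 / t) ^ k)"
  proof (rule sum_mono)
    fix S assume S: "S \<in> ?SS"
    then have fS: "finite S" "S \<noteq> {}" using assms
      by (auto dest: finite_subset[OF _ finite_atLeastAtMost])
    have eq: "(\<Inter>i\<in>S. {\<omega> \<in> space M. t < X i \<omega>}) = (\<Inter>i\<in>S. X i -` {t<..} \<inter> space M)"
      by auto
    have "prob (\<Inter>i\<in>S. X i -` {t<..} \<inter> space M) = (\<Prod>i\<in>S. prob (X i -` {t<..} \<inter> space M))"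
      by (rule indep_varsD[OF indep]) (use fS in auto)
    also have "\<dots> \<le> (\<Prod>i\<in>S. 2 / t)"
    proof (rule prod_mono)
      fix i assume "i \<in> S"
      have "X i -` {t<..} \<inter> space M = {\<omega> \<in> space M. t < X i \<omega>}" by auto
      then show "0 \<le> prob (X i -` {t<..} \<inter> space M) \<and> prob (X i -` {t<..} \<inter> space M) \<le> 2 / t"
        using tail[OF assms(2), of i] by simp
    qed
    also have "\<dots> = (2 / t) ^ k" using S by simp
    finally show "prob (\<Inter>i\<in>S. {\<omega> \<in> space M. t < X i \<omega>}) \<le> (2 / t) ^ k" using eq by simp
  qed
  also have "\<dots> = real (n choose k) * (2 / t) ^ k"
    using n_subsets[of "{1..n}" k] by simp
  finally show ?thesis .
qed

end


lemma pow_le_iff_floor: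
  assumes "T \<ge> 1"
  shows "((2::real) ^ j \<le> T) \<longleftrightarrow> j \<le> nat \<lfloor>log 2 T\<rfloor>"
proof -
  have "((2::real) ^ j \<le> T) \<longleftrightarrow> 2 powr real j \<le> T" by (simp add: powr_realpow)
  also have "\<dots> \<longleftrightarrow> real j \<le> log 2 T" using assms by (subst le_log_iff) auto
  also have "\<dots> \<longleftrightarrow> int j \<le> \<lfloor>log 2 T\<rfloor>" by (simp add: le_floor_iff)
  also have "\<dots> \<longleftrightarrow> j \<le> nat \<lfloor>log 2 T\<rfloor>"
  proof -
    have "0 \<le> \<lfloor>log 2 T\<rfloor>" using assms by simp
    then show ?thesis by (simp add: le_nat_iff)
  qed
  finally show ?thesis .
qed

lemma pow_sum2: "(\<Sum>k\<in>{1..N}. (2::real) ^ k) = 2 ^ (N + 1) - 2"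
  by (induction N) auto

lemma exp_quad: assumes "0 \<le> (u::real)" shows "exp u \<le> 1 + u + u^2 / 2 * exp u"
proof -
  obtain t where t: "\<bar>t\<bar> \<le> \<bar>u\<bar>" "exp u = (\<Sum>m<2. (u ^ m) / fact m) + (exp t / fact 2) * u ^ 2"
    using Maclaurin_exp_le[of u 2] by blast
  have "exp t \<le> exp u" using t(1) assms by simp
  then have "exp t * u ^ 2 / 2 \<le> u ^ 2 / 2 * exp u"
    by (simp add: mult_right_mono mult.commute)
  moreover have "exp u = 1 + u + exp t * u ^ 2 / 2" using t(2) by (simp add: eval_nat_numeral fact_2)
  ultimately show ?thesis by linarith
qed

context stp begin

definition Zt :: "real \<Rightarrow> nat \<Rightarrow> 'a \<Rightarrow> real" where
  "Zt T i \<omega> = (if 0 \<le> X i \<omega> \<and> X i \<omega> \<le> T then X i \<omega> else 0)"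

lemma Zt_meas[measurable]: "Zt T i \<in> borel_measurable M"
  unfolding Zt_def by measurable

lemma Zt_bounds: "T \<ge> 0 \<Longrightarrow> 0 \<le> Zt T i \<omega> \<and> Zt T i \<omega> \<le> T"
  unfolding Zt_def by auto

lemma Zt_pow_repr:
  assumes "T \<ge> 1" "\<omega> \<in> G i" and that: "p \<ge> 1"
  shows "Zt T i \<omega> ^ p = (\<Sum>k\<in>{1..nat \<lfloor>log 2 T\<rfloor>}. (2 ^ k) ^ p * indicator {\<omega> \<in> space M. X i \<omega> = 2 ^ k} \<omega>)"
proof -
  obtain j where j: "j \<ge> 1" "X i \<omega> = 2 ^ j" using G_pow2[OF assms(2)] by blast
  have sp: "\<omega> \<in> space M" using assms(2) G_sets sets.sets_into_space by blast
  have ind: "indicator {\<omega> \<in> space M. X i \<omega> = 2 ^ k} \<omega> = (if k = j then 1 else (0::real))" for k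
    using sp j by (auto simp: indicator_def)
  have "(\<Sum>k\<in>{1..nat \<lfloor>log 2 T\<rfloor>}. (2 ^ k) ^ p * indicator {\<omega> \<in> space M. X i \<omega> = 2 ^ k} \<omega>)
      = (\<Sum>k\<in>{1..nat \<lfloor>log 2 T\<rfloor>}. if k = j then ((2::real) ^ j) ^ p else 0)"
    by (intro sum.cong) (auto simp: ind)
  also have "\<dots> = (if j \<in> {1..nat \<lfloor>log 2 T\<rfloor>} then (2 ^ j) ^ p else 0)"
    by (simp only: sum.delta[OF finite_atLeastAtMost])
  also have "\<dots> = Zt T i \<omega> ^ p"
    using j pow_le_iff_floor[OF assms(1), of j] that by (auto simp: Zt_def)
  finally show ?thesis by simp
qed

lemma AE_G: "AE \<omega> in M. \<omega> \<in> G i"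
  by (rule AE_prob_1) (rule G_prob)

lemma EZ_pow:
  assumes "T \<ge> 1" "p \<ge> 1"
  shows "expectation (\<lambda>\<omega>. Zt T i \<omega> ^ p) = (\<Sum>k\<in>{1..nat \<lfloor>log 2 T\<rfloor>}. (2 ^ k) ^ p / 2 ^ k)"
proof -
  have "expectation (\<lambda>\<omega>. Zt T i \<omega> ^ p) =
     expectation (\<lambda>\<omega>. \<Sum>k\<in>{1..nat \<lfloor>log 2 T\<rfloor>}. (2 ^ k) ^ p * indicator {\<omega> \<in> space M. X i \<omega> = 2 ^ k} \<omega>)"
  proof (rule integral_cong_AE)
    show "AE \<omega> in M. Zt T i \<omega> ^ p = (\<Sum>k\<in>{1..nat \<lfloor>log 2 T\<rfloor>}. (2 ^ k) ^ p * indicator {\<omega> \<in> space M. X i \<omega> = 2 ^ k} \<omega>)"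
      using AE_G[of i] by eventually_elim (rule Zt_pow_repr[OF assms(1) _ assms(2)])
  qed measurable
  also have "\<dots> = (\<Sum>k\<in>{1..nat \<lfloor>log 2 T\<rfloor>}. expectation (\<lambda>\<omega>. (2 ^ k) ^ p * indicator {\<omega> \<in> space M. X i \<omega> = 2 ^ k} \<omega>))"
  proof (rule Bochner_Integration.integral_sum)
    fix k show "integrable M (\<lambda>\<omega>. (2 ^ k) ^ p * indicator {\<omega> \<in> space M. X i \<omega> = 2 ^ k} \<omega> :: real)"
      by (intro integrable_mult_right integrable_real_indicator) (auto simp: less_top[symmetric])
  qed
  also have "\<dots> = (\<Sum>k\<in>{1..nat \<lfloor>log 2 T\<rfloor>}. (2 ^ k) ^ p * prob {\<omega> \<in> space M. X i \<omega> = 2 ^ k})"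
    by (intro sum.cong refl) simp
  also have "\<dots> = (\<Sum>k\<in>{1..nat \<lfloor>log 2 T\<rfloor>}. (2 ^ k) ^ p / 2 ^ k)"
    by (intro sum.cong refl) (auto simp: dist)
  finally show ?thesis .
qed

lemma EZ1: assumes "T \<ge> 1" shows "expectation (Zt T i) \<le> log 2 T"
proof -
  have "expectation (Zt T i) = expectation (\<lambda>\<omega>. Zt T i \<omega> ^ 1)" by simp
  also have "\<dots> = (\<Sum>k\<in>{1..nat \<lfloor>log 2 T\<rfloor>}. (2 ^ k) ^ 1 / 2 ^ k)" by (rule EZ_pow) (use assms in auto)
  also have "\<dots> = real (nat \<lfloor>log 2 T\<rfloor>)" by simp
  also have "\<dots> \<le> log 2 T" using assms by simp
  finally show ?thesis .
qed

lemma EZ2: assumes "T \<ge> 1" shows "expectation (\<lambda>\<omega>. Zt T i \<omega> ^ 2) \<le> 2 * T"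
proof -
  have "expectation (\<lambda>\<omega>. Zt T i \<omega> ^ 2) = (\<Sum>k\<in>{1..nat \<lfloor>log 2 T\<rfloor>}. (2 ^ k) ^ 2 / 2 ^ k)"
    by (rule EZ_pow) (use assms in auto)
  also have "\<dots> = (\<Sum>k\<in>{1..nat \<lfloor>log 2 T\<rfloor>}. (2::real) ^ k)"
    by (intro sum.cong refl) (simp add: power2_eq_square)
  also have "\<dots> = 2 ^ (nat \<lfloor>log 2 T\<rfloor> + 1) - 2" by (rule pow_sum2)
  also have "\<dots> \<le> 2 * T" using pow_le_iff_floor[OF assms, of "nat \<lfloor>log 2 T\<rfloor>"] by simp
  finally show ?thesis .
qed

end


context stp begin

lemma intZ: "T \<ge> 0 \<Longrightarrow> integrable M (Zt T i)"
  by (rule integrable_const_bound[where B=T]) (use Zt_bounds in auto)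

lemma intZ2: "T \<ge> 0 \<Longrightarrow> integrable M (\<lambda>\<omega>. Zt T i \<omega> ^ 2)"
proof (rule integrable_const_bound[where B="T^2"])
  assume "T \<ge> 0"
  then show "AE x in M. norm (Zt T i x ^ 2) \<le> T ^ 2"
    using Zt_bounds by (auto intro!: power_mono)
qed auto

lemma intExpZ: "T \<ge> 0 \<Longrightarrow> l \<ge> 0 \<Longrightarrow> integrable M (\<lambda>\<omega>. exp (l * Zt T i \<omega>))"
proof (rule integrable_const_bound[where B="exp (l * T)"])
  assume "T \<ge> 0" "l \<ge> 0"
  then show "AE x in M. norm (exp (l * Zt T i x)) \<le> exp (l * T)"
    using Zt_bounds by (auto intro!: mult_left_mono)
qed auto

lemma E_exp_bound:
  assumes "T \<ge> 1" "l \<ge> 0"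
  shows "expectation (\<lambda>\<omega>. exp (l * Zt T i \<omega>)) \<le> exp (l * log 2 T + l^2 * T * exp (l * T))"
proof -
  let ?c2 = "l^2 * exp (l * T) / 2"
  have pw: "exp (l * Zt T i \<omega>) \<le> 1 + l * Zt T i \<omega> + ?c2 * Zt T i \<omega> ^ 2" for \<omega>
  proof -
    have b: "0 \<le> Zt T i \<omega>" "Zt T i \<omega> \<le> T" using Zt_bounds assms by auto
    have "exp (l * Zt T i \<omega>) \<le> 1 + l * Zt T i \<omega> + (l * Zt T i \<omega>)^2 / 2 * exp (l * Zt T i \<omega>)"
      using b assms by (intro exp_quad) auto
    also have "(l * Zt T i \<omega>)^2 / 2 * exp (l * Zt T i \<omega>) \<le> (l * Zt T i \<omega>)^2 / 2 * exp (l * T)"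
      using b assms by (intro mult_left_mono) (auto intro!: mult_left_mono)
    also have "(l * Zt T i \<omega>)^2 / 2 * exp (l * T) = ?c2 * Zt T i \<omega> ^ 2"
      by (simp add: power_mult_distrib)
    finally show ?thesis by simp
  qed
  have "expectation (\<lambda>\<omega>. exp (l * Zt T i \<omega>)) \<le> expectation (\<lambda>\<omega>. 1 + l * Zt T i \<omega> + ?c2 * Zt T i \<omega> ^ 2)"
  proof (intro integral_mono intExpZ pw)
    show "integrable M (\<lambda>\<omega>. 1 + l * Zt T i \<omega> + ?c2 * Zt T i \<omega> ^ 2)"
    proof (rule integrable_const_bound[where B="1 + l * T + ?c2 * T^2"])
      have "\<bar>1 + l * Zt T i \<omega> + ?c2 * Zt T i \<omega> ^ 2\<bar> \<le> 1 + l * T + ?c2 * T^2" for \<omega>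
      proof -
        have b: "0 \<le> Zt T i \<omega>" "Zt T i \<omega> \<le> T" using Zt_bounds assms by auto
        have "l * Zt T i \<omega> \<le> l * T" using b assms by (intro mult_left_mono) auto
        moreover have "?c2 * Zt T i \<omega> ^ 2 \<le> ?c2 * T^2" using b assms by (intro mult_left_mono power_mono) auto
        moreover have "0 \<le> l * Zt T i \<omega>" "0 \<le> ?c2 * Zt T i \<omega> ^ 2" using b assms by auto
        ultimately show ?thesis by linarith
      qed
      then show "AE x in M. norm (1 + l * Zt T i x + ?c2 * Zt T i x ^ 2) \<le> 1 + l * T + ?c2 * T^2"
        by (intro AE_I2) (metis real_norm_def)
    qed measurable
  qed (use assms in auto)
  also have "\<dots> = 1 + l * expectation (Zt T i) + ?c2 * expectation (\<lambda>\<omega>. Zt T i \<omega> ^ 2)"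
    using assms intZ[of T i] intZ2[of T i] by (simp add: prob_space)
  also have "\<dots> \<le> 1 + l * log 2 T + ?c2 * (2 * T)"
    using assms EZ1[of T i] EZ2[of T i] by (intro add_mono mult_left_mono) auto
  also have "\<dots> = 1 + (l * log 2 T + l^2 * T * exp (l * T))" by simp
  also have "\<dots> \<le> exp (l * log 2 T + l^2 * T * exp (l * T))" by (rule exp_ge_add_one_self)
  finally show ?thesis .
qed

lemma chernoff:
  assumes "T \<ge> 1" "l \<ge> 0"
  shows "prob {\<omega> \<in> space M. s \<le> (\<Sum>i\<in>{1..n}. Zt T i \<omega>)}
     \<le> exp (- l * s + real n * (l * log 2 T + l^2 * T * exp (l * T)))"
proof -
  let ?c = "l * log 2 T + l^2 * T * exp (l * T)"
  let ?S = "\<lambda>\<omega>. \<Sum>i\<in>{1..n}. Zt T i \<omega>"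
  have sub: "{\<omega> \<in> space M. s \<le> ?S \<omega>} \<subseteq> {\<omega> \<in> space M. exp (l * s) \<le> exp (l * ?S \<omega>)}"
    using assms by (auto intro!: mult_left_mono)
  have Sb: "?S \<omega> \<le> real n * T" for \<omega>
    using sum_bounded_above[of "{1..n}" "\<lambda>i. Zt T i \<omega>" T] Zt_bounds assms by auto
  have int: "integrable M (\<lambda>\<omega>. exp (l * ?S \<omega>))"
  proof (rule integrable_const_bound[where B="exp (l * (real n * T))"])
    show "AE x in M. norm (exp (l * ?S x)) \<le> exp (l * (real n * T))"
      using Sb assms by (auto intro!: mult_left_mono)
  qed auto
  have "prob {\<omega> \<in> space M. s \<le> ?S \<omega>} \<le> prob {\<omega> \<in> space M. exp (l * s) \<le> exp (l * ?S \<omega>)}"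
    by (rule finite_measure_mono[OF sub]) measurable
  also have "\<dots> \<le> expectation (\<lambda>\<omega>. exp (l * ?S \<omega>)) / exp (l * s)"
    by (rule integral_Markov_inequality_measure[OF int]) auto
  also have "expectation (\<lambda>\<omega>. exp (l * ?S \<omega>)) = expectation (\<lambda>\<omega>. \<Prod>i\<in>{1..n}. exp (l * Zt T i \<omega>))"
    by (simp add: sum_distrib_left exp_sum)
  also have "\<dots> = (\<Prod>i\<in>{1..n}. expectation (\<lambda>\<omega>. exp (l * Zt T i \<omega>)))"
  proof (rule indep_vars_lebesgue_integral)
    have "indep_vars (\<lambda>_. borel) (\<lambda>i \<omega>. (\<lambda>x. exp (l * (if 0 \<le> x \<and> x \<le> T then x else 0))) (X i \<omega>)) {1..n}"
      by (rule indep_vars_compose2[OF indep_vars_subset[OF indep]]) auto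
    then show "indep_vars (\<lambda>_. borel) (\<lambda>i \<omega>. exp (l * Zt T i \<omega>)) {1..n}"
      by (simp add: Zt_def)
    show "\<And>i. i \<in> {1..n} \<Longrightarrow> integrable M (\<lambda>\<omega>. exp (l * Zt T i \<omega>))"
      using assms by (intro intExpZ) auto
  qed auto
  also have "\<dots> \<le> (\<Prod>i\<in>{1..n}. exp ?c)"
    using E_exp_bound[OF assms] by (intro prod_mono) auto
  also have "\<dots> = exp (real n * ?c)" by (simp add: exp_of_nat_mult)
  finally have "prob {\<omega> \<in> space M. s \<le> ?S \<omega>} \<le> exp (real n * ?c) / exp (l * s)"
    by (simp add: divide_right_mono)
  also have "\<dots> = exp (real n * ?c - l * s)" by (rule exp_diff[symmetric])
  also have "\<dots> = exp (- l * s + real n * ?c)" by (simp add: algebra_simps)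
  finally show ?thesis .
qed

end


definition Gf :: "real \<Rightarrow> real" where
  "Gf u = real_of_int \<lfloor>log 2 u\<rfloor> - 1 + u / 2 powr real_of_int \<lfloor>log 2 u\<rfloor>"

lemma floor_pow_bounds:
  assumes "u > 0"
  shows "2 powr real_of_int \<lfloor>log 2 u\<rfloor> \<le> u" "u < 2 * 2 powr real_of_int \<lfloor>log 2 u\<rfloor>"
proof -
  have "2 powr real_of_int \<lfloor>log 2 u\<rfloor> \<le> 2 powr (log 2 u)" by (intro powr_mono) auto
  then show "2 powr real_of_int \<lfloor>log 2 u\<rfloor> \<le> u" using assms by simp
  have "u = 2 powr (log 2 u)" using assms by simp
  also have "\<dots> < 2 powr (real_of_int \<lfloor>log 2 u\<rfloor> + 1)"
    using floor_correct[of "log 2 u"] by (intro powr_less_mono) auto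
  also have "\<dots> = 2 * 2 powr real_of_int \<lfloor>log 2 u\<rfloor>" by (simp add: powr_add)
  finally show "u < 2 * 2 powr real_of_int \<lfloor>log 2 u\<rfloor>" .
qed

lemma two_pow_ge: "real d \<le> 2 ^ d - 1"
proof (induction d)
  case (Suc d) then show ?case by simp
qed simp

lemma key_env:
  assumes "u > 0"
  shows "Gf u \<le> real_of_int i - 1 + u / 2 powr real_of_int i"
proof -
  define m where "m = \<lfloor>log 2 u\<rfloor>"
  define a where "a = 2 powr real_of_int m"
  have a0: "a > 0" by (simp add: a_def)
  have b1: "a \<le> u" "u < 2 * a" using floor_pow_bounds[OF assms] by (auto simp: a_def m_def)
  show ?thesis
  proof (cases "m \<le> i")
    case True
    define d where "d = nat (i - m)"
    have id: "real_of_int i = real_of_int m + real d" using True by (simp add: d_def)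
    have pi: "2 powr real_of_int i = a * 2 ^ d" by (simp add: id powr_add a_def powr_realpow)
    have dd: "2 * (1 - 1 / 2 ^ d) \<le> real d"
    proof (cases "d \<ge> 2")
      case True
      have "2 * (1 - 1 / 2 ^ d) \<le> (2::real)" by simp
      also have "\<dots> \<le> real d" using True by simp
      finally show ?thesis .
    next
      case False then have "d = 0 \<or> d = 1" by auto
      then show ?thesis by auto
    qed
    have "u / a - u / (a * 2 ^ d) = (u / a) * (1 - 1 / 2 ^ d)" using a0 by (simp add: field_simps)
    also have "\<dots> \<le> 2 * (1 - 1 / 2 ^ d)"
      using b1 a0 by (intro mult_right_mono) (auto simp: field_simps)
    also have "\<dots> \<le> real d" by (rule dd)
    finally have "u / a - u / (a * 2 ^ d) \<le> real d" .
    then show ?thesis unfolding Gf_def using pi id by (simp add: a_def m_def[symmetric])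
  next
    case False
    define d where "d = nat (m - i)"
    have id: "real_of_int i = real_of_int m - real d" using False by (simp add: d_def)
    have pi: "2 powr real_of_int i = a / 2 ^ d" by (simp add: id powr_diff a_def powr_realpow)
    have "real d \<le> 2 ^ d - 1" by (rule two_pow_ge)
    also have "\<dots> \<le> (u / a) * (2 ^ d - 1)"
    proof -
      have "1 \<le> u / a" using b1 a0 by (auto simp: field_simps)
      moreover have "(0::real) \<le> 2 ^ d - 1" by simp
      ultimately show ?thesis using mult_right_mono[of 1 "u / a" "2 ^ d - 1"] by simp
    qed
    also have "\<dots> = u / (a / 2 ^ d) - u / a" using a0 by (simp add: field_simps)
    finally have "real d \<le> u / (a / 2 ^ d) - u / a" .
    then show ?thesis unfolding Gf_def using pi id by (simp add: a_def m_def[symmetric])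
  qed
qed

lemma G_step:
  assumes "0 < u" "u \<le> w"
  shows "Gf w - Gf u \<le> (w - u) / 2 powr real_of_int \<lfloor>log 2 u\<rfloor>"
proof -
  have "Gf w \<le> real_of_int \<lfloor>log 2 u\<rfloor> - 1 + w / 2 powr real_of_int \<lfloor>log 2 u\<rfloor>"
    using assms by (intro key_env) auto
  then show ?thesis unfolding Gf_def[of u] by (simp add: diff_divide_distrib)
qed

lemma G_bounds:
  assumes "u > 0"
  shows "log 2 u - 1 \<le> Gf u" "Gf u \<le> log 2 u + 1"
proof -
  define a where "a = 2 powr real_of_int \<lfloor>log 2 u\<rfloor>"
  have b1: "a \<le> u" "u < 2 * a" using floor_pow_bounds[OF assms] by (auto simp: a_def)
  have a0: "a > 0" by (simp add: a_def)
  have "1 \<le> u / a" "u / a \<le> 2" using b1 a0 by (auto simp: field_simps)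
  moreover have "log 2 u - 1 \<le> real_of_int \<lfloor>log 2 u\<rfloor>" "real_of_int \<lfloor>log 2 u\<rfloor> \<le> log 2 u"
    using floor_correct[of "log 2 u"] by auto
  ultimately show "log 2 u - 1 \<le> Gf u" "Gf u \<le> log 2 u + 1"
    unfolding Gf_def a_def[symmetric] by linarith+
qed

lemma Psi_term:
  assumes "j > 0" "g > 0"
  shows "Psi (j / g) / j = (1 / g) / 2 powr real_of_int \<lfloor>log 2 (j / g)\<rfloor>"
proof -
  have "Psi (j / g) = 2 powr (log 2 (j / g) - real_of_int \<lfloor>log 2 (j / g)\<rfloor>)"
    by (simp add: Psi_def frac_def)
  also have "\<dots> = (j / g) / 2 powr real_of_int \<lfloor>log 2 (j / g)\<rfloor>"
    using assms by (simp add: powr_diff)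
  finally show ?thesis using assms by simp
qed

lemma a_lower:
  assumes "n \<ge> 1" "g > 0"
  shows "log 2 (real n) - log 2 (real r + 1) - 2 \<le> a_const r n g"
proof (cases "n \<le> r")
  case True
  then have "a_const r n g = 0" by (simp add: a_const_def)
  moreover have "log 2 (real n) \<le> log 2 (real r + 1)" using True assms by simp
  ultimately show ?thesis by simp
next
  case False
  let ?f = "\<lambda>i::nat. Gf (real i / g)"
  have "(\<Sum>j = r+1..n. ?f (Suc j) - ?f j) \<le> a_const r n g"
    unfolding a_const_def
  proof (rule sum_mono)
    fix j assume j: "j \<in> {r+1..n}"
    then have jp: "real j > 0" by auto
    have "?f (Suc j) - ?f j \<le> (real (Suc j) / g - real j / g) / 2 powr real_of_int \<lfloor>log 2 (real j / g)\<rfloor>"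
      using jp assms by (intro G_step) (auto simp: divide_right_mono)
    also have "(real (Suc j) / g - real j / g) = 1 / g" by (simp add: diff_divide_distrib[symmetric])
    finally show "?f (Suc j) - ?f j \<le> Psi (real j / g) / real j"
      using Psi_term[OF jp assms(2)] by simp
  qed
  moreover have "(\<Sum>j = r+1..n. ?f (Suc j) - ?f j) = ?f (Suc n) - ?f (r+1)"
    using False by (intro sum_Suc_diff) auto
  moreover have "log 2 (real (Suc n) / g) - 1 \<le> ?f (Suc n)" using assms by (intro G_bounds) auto
  moreover have "?f (r+1) \<le> log 2 (real (r+1) / g) + 1" using assms by (intro G_bounds) auto
  moreover have "log 2 (real (Suc n) / g) = log 2 (real (Suc n)) - log 2 g"
    using assms by (simp add: log_divide)
  moreover have "log 2 (real (r+1) / g) = log 2 (real r + 1) - log 2 g"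
    using assms by (simp add: log_divide add.commute)
  moreover have "log 2 (real n) \<le> log 2 (real (Suc n))" using assms by simp
  ultimately show ?thesis by linarith
qed



lemma sorted_desc_count:
  fixes ys :: "real list"
  assumes "sorted_wrt (\<ge>) ys" "j < length ys" "t < ys ! j"
  shows "j + 1 \<le> length (filter (\<lambda>y. t < y) ys)"
proof -
  have all: "\<forall>x\<in>set (take (j+1) ys). t < x"
  proof
    fix x assume "x \<in> set (take (j+1) ys)"
    then obtain i where i: "i < length (take (j+1) ys)" "x = take (j+1) ys ! i"
      by (auto simp: in_set_conv_nth)
    then have ij: "i \<le> j" "x = ys ! i" by auto
    have "ys ! j \<le> ys ! i"
    proof (cases "i = j")
      case False
      then show ?thesis using assms(1,2) ij by (auto simp: sorted_wrt_iff_nth_less)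
    qed simp
    then show "t < x" using assms(3) ij by simp
  qed
  have "length (filter (\<lambda>y. t < y) ys) = length (filter (\<lambda>y. t < y) (take (j+1) ys)) + length (filter (\<lambda>y. t < y) (drop (j+1) ys))"
    by (metis append_take_drop_id filter_append length_append)
  also have "filter (\<lambda>y. t < y) (take (j+1) ys) = take (j+1) ys" using all by (simp add: filter_True)
  finally show ?thesis using assms(2) by simp
qed

lemma count_perm:
  assumes "mset xs = mset ys"
  shows "length (filter P xs) = length (filter P ys)"
  by (metis assms mset_filter size_mset)

lemma trim_list:
  fixes xs :: "real list"
  assumes nn: "\<forall>y\<in>set xs. 0 \<le> y"
    and c1: "length (filter (\<lambda>y. t1 < y) xs) \<le> r"
    and c2: "length (filter (\<lambda>y. t2 < y) xs) \<le> r + 1"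
    and t1: "0 \<le> t1"
  shows "sum_list (drop r (rev (sort xs))) \<le> t1 + sum_list (map (\<lambda>y. if y \<le> t2 then y else 0) xs)"
proof -
  define ys where "ys = rev (sort xs)"
  define h where "h = (\<lambda>y::real. if y \<le> t2 then y else 0)"
  have sw: "sorted_wrt (\<ge>) ys" unfolding ys_def by (simp add: sorted_wrt_rev)
  have ms: "mset ys = mset xs" unfolding ys_def by simp
  have cnt: "length (filter P ys) = length (filter P xs)" for P using count_perm[OF ms] .
  have nny: "\<forall>y\<in>set ys. 0 \<le> y" using nn ms by (metis set_mset_mset)
  have hnn: "0 \<le> h y" if "0 \<le> y" for y using that by (simp add: h_def)
  have sh: "sum_list (map h ys) = sum_list (map h xs)"
    by (metis ms mset_map sum_mset_sum_list)
  have hsum_nn: "0 \<le> sum_list (map h zs)" if "\<forall>y\<in>set zs. 0 \<le> y" for zs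
    using that by (induction zs) (auto simp: h_def)
  show ?thesis
  proof (cases "drop r ys")
    case Nil
    then show ?thesis using hsum_nn[OF nn] t1 by (simp add: ys_def[symmetric] h_def[symmetric])
  next
    case (Cons w ws)
    then have rl: "r < length ys" by (metis drop_all list.distinct(1) not_le)
    have w: "w = ys ! r" using Cons rl by (metis hd_drop_conv_nth list.sel(1))
    have wle: "w \<le> t1"
    proof (rule ccontr)
      assume "\<not> w \<le> t1"
      then have "r + 1 \<le> length (filter (\<lambda>y. t1 < y) ys)"
        using sorted_desc_count[OF sw rl] w by simp
      then show False using c1 cnt by simp
    qed
    have ws: "ws = drop (Suc r) ys" using Cons by (metis drop_Suc list.sel(3) tl_drop)
    have wsle: "y \<le> t2" if yin: "y \<in> set ws" for y
    proof (rule ccontr)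
      assume "\<not> y \<le> t2"
      obtain q where q: "q < length ws" "y = ws ! q" using yin by (metis in_set_conv_nth)
      have "Suc r + q < length ys" "y = ys ! (Suc r + q)" using q ws by auto
      then have "Suc r + q + 1 \<le> length (filter (\<lambda>y. t2 < y) ys)"
        using sorted_desc_count[OF sw] \<open>\<not> y \<le> t2\<close> by simp
      then show False using c2 cnt by simp
    qed
    have "sum_list ws = sum_list (map h ws)"
    proof -
      have "map h ws = ws" using wsle by (induction ws) (auto simp: h_def map_idI)
      then show ?thesis by simp
    qed
    have split: "ys = take r ys @ w # ws" using Cons by (metis append_take_drop_id)
    have "sum_list (map h ys) = sum_list (map h (take r ys)) + h w + sum_list (map h ws)"
      by (subst split) simp
    moreover have "0 \<le> sum_list (map h (take r ys))" using nny
      by (intro hsum_nn) (auto dest: in_set_takeD)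
    moreover have "0 \<le> h w" using nny split by (intro hnn) (metis in_set_conv_decomp)
    ultimately have "sum_list (map h ws) \<le> sum_list (map h ys)" by linarith
    then have "sum_list (drop r ys) \<le> t1 + sum_list (map h ys)"
      using Cons wle \<open>sum_list ws = sum_list (map h ws)\<close> by simp
    then show ?thesis using sh by (simp add: ys_def h_def)
  qed
qed

lemma sum_nth_drop:
  fixes ys :: "real list"
  assumes "length ys = n"
  shows "(\<Sum>k = r+1..n. ys ! (k - 1)) = sum_list (drop r ys)"
proof -
  have "sum_list (drop r ys) = (\<Sum>i = 0..<length (drop r ys). drop r ys ! i)"
    by (rule sum_list_sum_nth)
  also have "\<dots> = (\<Sum>k = r+1..n. ys ! (k - 1))"
    by (rule sum.reindex_bij_witness[where i="\<lambda>k. k - 1 - r" and j="\<lambda>i. i + r + 1"])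
       (use assms in \<open>auto simp: add.commute\<close>)
  finally show ?thesis by simp
qed

lemma trimmed_sum_list:
  "trimmed_sum X n r \<omega> = sum_list (drop r (rev (sort (map (\<lambda>i. X i \<omega>) [1..<n+1]))))"
  unfolding trimmed_sum_def dec_rearr_def by (rule sum_nth_drop) simp



lemma len_filter_card:
  "length (filter P (map f [1..<n+1])) = card {i\<in>{1..n}. P (f i)}"
proof -
  have "length (filter P (map f [1..<n+1])) = length (filter (P \<circ> f) [1..<n+1])" by simp
  also have "\<dots> = card (set (filter (P \<circ> f) [1..<n+1]))"
    by (rule distinct_card[symmetric]) simp
  also have "set (filter (P \<circ> f) [1..<n+1]) = {i\<in>{1..n}. P (f i)}" by auto
  finally show ?thesis .
qed

lemma ln2_ge_half: "1/2 \<le> ln (2::real)"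
proof -
  have "exp (1/2::real) \<le> 2" using exp_bound_lemma[of "1/2::real"] by simp
  then show ?thesis by (subst ln_ge_iff) auto
qed

lemma log2_small:
  assumes "y \<ge> (100::real)"
  shows "log 2 y + 2 \<le> y / 2"
proof -
  have y0: "y > 0" using assms by simp
  have l1: "ln y \<le> 2 * sqrt y"
    using ln_powr_bound[of y "1/2"] assms by (simp add: powr_half_sqrt)
  have "log 2 y = ln y / ln 2" by (simp add: log_def)
  also have "\<dots> \<le> ln y / (1/2)"
    using ln2_ge_half assms by (intro divide_left_mono) auto
  also have "\<dots> \<le> 4 * sqrt y" using l1 by simp
  finally have l2: "log 2 y \<le> 4 * sqrt y" .
  have s10: "sqrt y \<ge> 10" using assms real_sqrt_le_mono[of 100 y] by simp
  have "sqrt y * sqrt y = y" using y0 by simp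
  moreover have "sqrt y * sqrt y \<ge> 10 * sqrt y" using s10 y0 by (intro mult_right_mono) auto
  ultimately show ?thesis using l2 s10 by linarith
qed

lemma exponent_bound:
  fixes y m nn a :: real
  assumes y: "y \<ge> 100" and m: "m > 0" and nn: "nn \<ge> 1"
    and cond: "log 2 (y * nn / m) - a - y \<le> - y / 2"
  shows "- (ln y / 2 / (y * nn / m)) * (nn * (a + y)) + nn * ((ln y / 2 / (y * nn / m)) * log 2 (y * nn / m)
      + (ln y / 2 / (y * nn / m))^2 * (y * nn / m) * exp ((ln y / 2 / (y * nn / m)) * (y * nn / m)))
      \<le> - (ln y / 2) * m / 2 + 4 * m"
proof -
  define \<theta> where "\<theta> = ln y / 2"
  define T2 where "T2 = y * nn / m"
  have y0: "y > 0" using y by simp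
  have T20: "T2 > 0" using y0 m nn by (simp add: T2_def)
  have th0: "\<theta> \<ge> 0" using y by (simp add: \<theta>_def)
  have lT: "\<theta> / T2 * T2 = \<theta>" using T20 by simp
  have eq: "- (\<theta> / T2) * (nn * (a + y)) + nn * ((\<theta> / T2) * log 2 T2 + (\<theta> / T2)^2 * T2 * exp (\<theta> / T2 * T2))
      = (\<theta> * m / y) * (log 2 T2 - a - y) + (\<theta> * m / y) * (\<theta> * exp \<theta>)"
    using y0 m nn T20 unfolding lT by (simp add: T2_def field_simps power2_eq_square)
  have p1: "(\<theta> * m / y) * (log 2 T2 - a - y) \<le> (\<theta> * m / y) * (- y / 2)"
    using cond th0 m y0 by (intro mult_left_mono) (auto simp: T2_def)
  have p1': "(\<theta> * m / y) * (- y / 2) = - \<theta> * m / 2" using y0 by simp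
  have es: "exp \<theta> = sqrt y" using y0 by (simp add: \<theta>_def ln_sqrt[symmetric])
  have q: "\<theta> \<le> 2 * y powr (1/4)"
    using ln_powr_bound[of y "1/4"] y by (simp add: \<theta>_def)
  have "\<theta> * \<theta> \<le> (2 * y powr (1/4)) * (2 * y powr (1/4))"
    using q th0 by (intro mult_mono) auto
  also have "\<dots> = 4 * (y powr (1/4) * y powr (1/4))" by simp
  also have "y powr (1/4) * y powr (1/4) = y powr (1/2)" by (simp add: powr_add[symmetric])
  also have "\<dots> = sqrt y" using y0 by (simp add: powr_half_sqrt)
  finally have thsq: "\<theta> * \<theta> \<le> 4 * sqrt y" .
  have sy: "sqrt y > 0" using y0 by simp
  have "(\<theta> * m / y) * (\<theta> * exp \<theta>) = m * (\<theta> * \<theta>) / sqrt y"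
    using y0 sy es by (simp add: field_simps)
  also have "\<dots> \<le> m * (4 * sqrt y) / sqrt y"
    using thsq m sy by (intro divide_right_mono mult_left_mono) auto
  also have "\<dots> = 4 * m" using sy by simp
  finally have p2: "(\<theta> * m / y) * (\<theta> * exp \<theta>) \<le> 4 * m" .
  show ?thesis using eq p1 p1' p2 unfolding \<theta>_def[symmetric] T2_def[symmetric] by linarith
qed



lemma pow_div_powr:
  fixes z c :: real
  assumes "z > 0"
  shows "(c / z) ^ k = c ^ k * z powr (- real k)"
proof -
  have "(c / z) ^ k = c ^ k / z ^ k" by (simp add: power_divide)
  also have "\<dots> = c ^ k * inverse (z ^ k)" by (simp add: divide_inverse)
  also have "inverse (z ^ k) = z powr (- real k)" using assms by (simp add: powr_minus powr_realpow)
  finally show ?thesis .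
qed

context stp begin

lemma main_bound:
  assumes d: "0 < \<delta>" "\<delta> < 1" and xpos: "x > 0" and n: "n \<ge> 1"
    and yb: "\<delta> * x \<ge> 100" "\<delta> * x \<ge> real (4*r+8)"
  shows "prob {\<omega> \<in> space M. trimmed_sum X n r \<omega> / real n - a_const r n (gamma_n n) > x}
     \<le> 2 ^ (r+1) / fact (r+1) * ((1 - \<delta>) * x) powr (- real (r+1))
       + ((2 * real (4*r+8)) ^ (r+2) + exp (4 * real (4*r+8))) * (\<delta> * x) powr (- real (r+2))"
proof -
  define y where "y = \<delta> * x"
  define m where "m = real (4*r+8)"
  define a where "a = a_const r n (gamma_n n)"
  define T1 where "T1 = (1 - \<delta>) * x * real n"
  define T2 where "T2 = y * real n / m"
  define A where "A = Ex n (r+1) T1"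
  define B where "B = Ex n (r+2) T2"
  define D where "D = {\<omega> \<in> space M. real n * (a + y) \<le> (\<Sum>i\<in>{1..n}. Zt T2 i \<omega>)}"
  define Nl where "Nl = (\<Union>i\<in>{1..n}. space M - G i)"
  have gam: "gamma_n n > 0" using n by (simp add: gamma_n_def)
  have alow: "log 2 (real n) - log 2 (real r + 1) - 2 \<le> a"
    unfolding a_def using a_lower[OF n gam] .
  have y0: "y > 0" "y \<ge> 100" "y \<ge> m" using yb by (auto simp: y_def m_def)
  have m0: "m > 0" "m \<ge> real r + 1" by (auto simp: m_def)
  have n0: "real n \<ge> 1" using n by simp
  have T10: "T1 > 0" using d xpos n by (simp add: T1_def)
  have T21: "T2 \<ge> 1"
  proof -
    have "1 \<le> y / m" using y0 m0 by simp
    also have "\<dots> \<le> y * real n / m" using y0 m0 n0 by (simp add: divide_right_mono)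
    finally show ?thesis by (simp add: T2_def)
  qed
  have T20: "T2 > 0" using T21 by simp
  have sub: "{\<omega> \<in> space M. trimmed_sum X n r \<omega> / real n - a_const r n (gamma_n n) > x} \<subseteq> A \<union> B \<union> D \<union> Nl"
  proof
    fix \<omega> assume "\<omega> \<in> {\<omega> \<in> space M. trimmed_sum X n r \<omega> / real n - a_const r n (gamma_n n) > x}"
    then have sp: "\<omega> \<in> space M" and tg: "trimmed_sum X n r \<omega> / real n - a > x" by (auto simp: a_def)
    show "\<omega> \<in> A \<union> B \<union> D \<union> Nl"
    proof (rule ccontr)
      assume "\<omega> \<notin> A \<union> B \<union> D \<union> Nl"
      then have nA: "\<omega> \<notin> A" and nB: "\<omega> \<notin> B" and nD: "\<omega> \<notin> D" and nN: "\<omega> \<notin> Nl" by auto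
      have nonneg: "0 \<le> X i \<omega>" if "i \<in> {1..n}" for i
      proof -
        have "\<omega> \<in> G i" using nN sp that by (auto simp: Nl_def)
        then obtain k :: nat where "X i \<omega> = 2 ^ k" using G_pow2 by blast
        then show ?thesis by simp
      qed
      have c1: "card {i\<in>{1..n}. T1 < X i \<omega>} \<le> r"
      proof (rule ccontr)
        assume "\<not> ?thesis"
        then have "r + 1 \<le> card {i\<in>{1..n}. T1 < X i \<omega>}" by simp
        then have "\<omega> \<in> A" unfolding A_def by (rule Ex_mem[OF sp])
        then show False using nA by simp
      qed
      have c2: "card {i\<in>{1..n}. T2 < X i \<omega>} \<le> r + 1"
      proof (rule ccontr)
        assume "\<not> ?thesis"
        then have "r + 2 \<le> card {i\<in>{1..n}. T2 < X i \<omega>}" by simp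
        then have "\<omega> \<in> B" unfolding B_def by (rule Ex_mem[OF sp])
        then show False using nB by simp
      qed
      define xs where "xs = map (\<lambda>i. X i \<omega>) [1..<n+1]"
      have xsnn: "\<forall>z\<in>set xs. 0 \<le> z" using nonneg by (auto simp: xs_def)
      have l1: "length (filter (\<lambda>z. T1 < z) xs) \<le> r"
        using c1 len_filter_card[of "\<lambda>z. T1 < z" "\<lambda>i. X i \<omega>" n] by (simp add: xs_def)
      have l2: "length (filter (\<lambda>z. T2 < z) xs) \<le> r + 1"
        using c2 len_filter_card[of "\<lambda>z. T2 < z" "\<lambda>i. X i \<omega>" n] by (simp add: xs_def)
      have tl: "trimmed_sum X n r \<omega> \<le> T1 + sum_list (map (\<lambda>z. if z \<le> T2 then z else 0) xs)"
        unfolding trimmed_sum_list xs_def[symmetric]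
        using trim_list[OF xsnn l1 l2] T10 by simp
      have "sum_list (map (\<lambda>z. if z \<le> T2 then z else 0) xs) = (\<Sum>i\<in>{1..n}. (if X i \<omega> \<le> T2 then X i \<omega> else 0))"
        unfolding xs_def map_map interv_sum_list_conv_sum_set_nat
        by (intro sum.cong) auto
      also have "\<dots> = (\<Sum>i\<in>{1..n}. Zt T2 i \<omega>)"
        using nonneg by (intro sum.cong) (auto simp: Zt_def)
      finally have tl2: "trimmed_sum X n r \<omega> \<le> T1 + (\<Sum>i\<in>{1..n}. Zt T2 i \<omega>)" using tl by simp
      have "trimmed_sum X n r \<omega> > real n * (a + x)"
        using tg n0 by (simp add: field_simps)
      then have "real n * (a + x) - T1 < (\<Sum>i\<in>{1..n}. Zt T2 i \<omega>)" using tl2 by simp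
      moreover have "real n * (a + x) - T1 = real n * (a + y)"
        by (simp add: T1_def y_def algebra_simps)
      ultimately have "\<omega> \<in> D" using sp by (simp add: D_def)
      then show False using nD by simp
    qed
  qed
  have As: "A \<in> sets M" unfolding A_def by (rule Ex_sets) simp
  have Bs: "B \<in> sets M" unfolding B_def by (rule Ex_sets) simp
  have Ds: "D \<in> sets M" unfolding D_def by measurable
  have Ns: "Nl \<in> sets M" unfolding Nl_def by (intro sets.finite_UN) auto
  have "prob {\<omega> \<in> space M. trimmed_sum X n r \<omega> / real n - a_const r n (gamma_n n) > x} \<le> prob (A \<union> B \<union> D \<union> Nl)"
    by (rule finite_measure_mono[OF sub]) (use As Bs Ds Ns in auto)
  also have "\<dots> \<le> prob A + prob B + prob D + prob Nl"
    using As Bs Ds Ns measure_Un_le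
    by (smt (verit, ccfv_threshold) sets.Un)
  also have "prob Nl = 0"
  proof -
    have "prob Nl \<le> (\<Sum>i\<in>{1..n}. prob (space M - G i))"
      unfolding Nl_def by (rule finite_measure_subadditive_finite) auto
    also have "\<dots> = 0" by (simp add: prob_compl G_prob)
    finally show ?thesis using measure_nonneg[of M Nl] by linarith
  qed
  also have "prob A \<le> 2 ^ (r+1) / fact (r+1) * ((1 - \<delta>) * x) powr (- real (r+1))"
  proof -
    have "prob A \<le> real (n choose (r+1)) * (2 / T1) ^ (r+1)" unfolding A_def by (rule Ex_prob) (use T10 in auto)
    also have "\<dots> \<le> (real n * (2 / T1)) ^ (r+1) / fact (r+1)" using T10 by (intro binom_bound) auto
    also have "real n * (2 / T1) = 2 / ((1 - \<delta>) * x)" using n0 by (simp add: T1_def)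
    also have "(2 / ((1 - \<delta>) * x)) ^ (r+1) = 2 ^ (r+1) * ((1 - \<delta>) * x) powr (- real (r+1))"
      using d xpos by (intro pow_div_powr) auto
    finally show ?thesis by simp
  qed
  also have "prob B \<le> (2 * m) ^ (r+2) * y powr (- real (r+2))"
  proof -
    have "prob B \<le> real (n choose (r+2)) * (2 / T2) ^ (r+2)" unfolding B_def by (rule Ex_prob) (use T20 in auto)
    also have "\<dots> \<le> (real n * (2 / T2)) ^ (r+2) / fact (r+2)" using T20 by (intro binom_bound) auto
    also have "\<dots> \<le> (real n * (2 / T2)) ^ (r+2)"
    proof -
      have "0 \<le> (real n * (2 / T2)) ^ (r+2)" using T20 by simp
      moreover have "(1::real) \<le> fact (r+2)" by (rule fact_ge_1)
      ultimately show ?thesis using divide_left_mono[of 1 "fact (r+2)" "(real n * (2 / T2)) ^ (r+2)"] by simp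
    qed
    also have "real n * (2 / T2) = 2 * m / y" using n0 y0 m0 by (simp add: T2_def)
    also have "(2 * m / y) ^ (r+2) = (2 * m) ^ (r+2) * y powr (- real (r+2))"
      using y0 by (intro pow_div_powr) auto
    finally show ?thesis .
  qed
  also have "prob D \<le> exp (4 * m) * y powr (- real (r+2))"
  proof -
    define l where "l = ln y / 2 / T2"
    have l0: "l \<ge> 0" using y0 T20 by (simp add: l_def)
    have cond: "log 2 (y * real n / m) - a - y \<le> - y / 2"
    proof -
      have "log 2 (y * real n / m) = log 2 y + log 2 (real n) - log 2 m"
        using y0 m0 n0 by (simp add: log_mult log_divide)
      moreover have "log 2 (real r + 1) \<le> log 2 m" using m0 by simp
      moreover have "log 2 y + 2 \<le> y / 2" using y0 by (intro log2_small) auto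
      ultimately show ?thesis using alow by linarith
    qed
    have "prob D \<le> exp (- l * (real n * (a + y)) + real n * (l * log 2 T2 + l^2 * T2 * exp (l * T2)))"
      unfolding D_def by (rule chernoff[OF T21 l0])
    also have "\<dots> \<le> exp (- (ln y / 2) * m / 2 + 4 * m)"
      using exponent_bound[OF y0(2) m0(1) n0 cond] by (simp add: l_def T2_def)
    also have "\<dots> = exp (4 * m) * exp (- (m / 4) * ln y)" by (simp add: exp_add[symmetric] algebra_simps)
    also have "exp (- (m / 4) * ln y) = y powr (- real (r+2))"
      using y0 by (simp add: powr_def m_def algebra_simps)
    finally show ?thesis .
  qed
  finally show ?thesis by (simp add: y_def m_def algebra_simps)
qed

end


theorem theorem4:
  fixes M :: "'a measure" and X :: "nat \<Rightarrow> 'a \<Rightarrow> real" and r :: nat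
  assumes "prob_space M"
    and "\<And>i. X i \<in> borel_measurable M"
    and "prob_space.indep_vars M (\<lambda>_. borel) X UNIV"
    and "\<And>i k. k \<ge> 1 \<Longrightarrow> measure M {\<omega> \<in> space M. X i \<omega> = 2 ^ k} = 1 / 2 ^ k"
  shows "\<exists>C>0. \<forall>\<delta> x n. 0 < \<delta> \<and> \<delta> < 1 \<and> x \<ge> exp 1 \<and> n \<ge> 1 \<longrightarrow>
           measure M {\<omega> \<in> space M.
              trimmed_sum X n r \<omega> / real n - a_const r n (gamma_n n) > x}
           \<le> 2 ^ (r+1) / fact (r+1) * ((1 - \<delta>) * x) powr (- real (r+1))
             + C * \<delta> powr (- (real r + 3/2)) * x powr (- (real r + 3/2))"
proof -
  have stp: "stp M X" using assms unfolding stp_def stp_axioms_def by auto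
  interpret prob_space M by (rule assms(1))
  define e where "e = real r + 3/2"
  define L0 where "L0 = max 100 (real (4*r+8))"
  define C0 where "C0 = (2 * real (4*r+8)) ^ (r+2) + exp (4 * real (4*r+8))"
  define C where "C = C0 + L0 powr e"
  have L00: "L0 > 0" by (simp add: L0_def)
  have C00: "C0 > 0" by (simp add: C0_def add_pos_pos)
  show ?thesis
  proof (intro exI[of _ C] conjI allI impI)
    show "C > 0" using C00 L00 by (simp add: C_def add_pos_pos)
    fix \<delta> x :: real and n :: nat
    assume H: "0 < \<delta> \<and> \<delta> < 1 \<and> x \<ge> exp 1 \<and> n \<ge> 1"
    then have d: "0 < \<delta>" "\<delta> < 1" and xe: "x \<ge> exp 1" and n: "n \<ge> 1" by auto
    have x0: "x > 0" using xe exp_gt_zero[of 1] by linarith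
    have y0: "\<delta> * x > 0" using d x0 by simp
    let ?P = "measure M {\<omega> \<in> space M. trimmed_sum X n r \<omega> / real n - a_const r n (gamma_n n) > x}"
    let ?F = "2 ^ (r+1) / fact (r+1) * ((1 - \<delta>) * x) powr (- real (r+1))"
    have F0: "?F \<ge> 0" by simp
    have rhs: "C * \<delta> powr (- (real r + 3/2)) * x powr (- (real r + 3/2)) = C * (\<delta> * x) powr (- e)"
      using d x0 by (simp add: e_def powr_mult)
    have "?P \<le> ?F + C * (\<delta> * x) powr (- e)"
    proof (cases "\<delta> * x < L0")
      case True
      have "?P \<le> 1" by simp
      also have "1 = L0 powr e * L0 powr (- e)" using L00 by (simp add: powr_add[symmetric])
      also have "\<dots> \<le> L0 powr e * (\<delta> * x) powr (- e)"
        using True y0 by (intro mult_left_mono powr_mono2') (auto simp: e_def)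
      also have "\<dots> \<le> C * (\<delta> * x) powr (- e)"
        using C00 by (intro mult_right_mono) (auto simp: C_def)
      finally show ?thesis using F0 by linarith
    next
      case False
      then have yb: "\<delta> * x \<ge> 100" "\<delta> * x \<ge> real (4*r+8)" by (auto simp: L0_def)
      have "?P \<le> ?F + C0 * (\<delta> * x) powr (- real (r+2))"
        using stp.main_bound[OF stp d x0 n yb] by (simp add: C0_def)
      also have "C0 * (\<delta> * x) powr (- real (r+2)) \<le> C * (\<delta> * x) powr (- e)"
      proof (intro mult_mono)
        show "C0 \<le> C" by (simp add: C_def)
        show "(\<delta> * x) powr (- real (r+2)) \<le> (\<delta> * x) powr (- e)"
          using yb by (intro powr_mono) (auto simp: e_def)
      qed (use C00 L00 in \<open>auto simp: C_def\<close>)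
      finally show ?thesis by simp
    qed
    then show "?P \<le> ?F + C * \<delta> powr (- (real r + 3/2)) * x powr (- (real r + 3/2))"
      unfolding rhs .
  qed
qed


end
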